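(* Let $n\ge2$ and $Q\in SU_n$ with eigenvalues $\mu_1,\dots,\mu_n$ (with multiplicity). Let $s(Q)$ be the multiplicity of $-1$ as an eigenvalue of $Q$ (possibly $0$), $\zeta(Q):=\frac1{2\pi}\sum_{j=1}^n\arg(\mu_j)$, $m(Q):=\min\{\|X\|_\phi^2:X\in\mathfrak{su}_n,\ \exp(X)=Q\}$ and $\Theta(Q):=\{X\in\mathfrak{su}_n:\exp(X)=Q,\ \|X\|_\phi^2=m(Q)\}$. Then the following are equivalent: (i) $\mathfrak{su}_n\text{--}plog(Q)\ne\emptyset$; (ii) $\zeta(Q)\in\{0,1,\dots,s(Q)\}$; (iii) $m(Q)=\sum_{j=1}^n(\arg(\mu_j))^2$. Moreover, if any of these conditions holds, then $\Theta(Q)=\mathfrak{su}_n\text{--}plog(Q)$.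
   Context: $SU_n$ is the special unitary group, $\mathfrak{su}_n$ its Lie algebra of traceless skew-Hermitian matrices, $\|X\|_\phi=\sqrt{\mathrm{tr}(XX^* )}$ the Frobenius norm, $\arg(z)\in(-\pi,\pi]$ the principal argument. A generalized principal $\mathfrak{su}_n$-logarithm of $Q$ is a matrix $X\in\mathfrak{su}_n$ with $\exp(X)=Q$ such that every eigenvalue $\lambda$ of $X$ satisfies $-\pi\le\mathrm{Im}(\lambda)\le\pi$; $\mathfrak{su}_n\text{--}plog(Q)$ is the set of all of them. *)

theory Defs
  imports "HOL-Analysis.Complex_Transcendental" "Jordan_Normal_Form.Char_Poly"
begin

definition cadj :: "complex mat \<Rightarrow> complex mat" where
  "cadj A = mat (dim_col A) (dim_row A) (\<lambda>(i,j). cnj (A $$ (j,i)))"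

definition mtrace :: "complex mat \<Rightarrow> complex" where
  "mtrace A = (\<Sum>i<dim_row A. A $$ (i,i))"

definition mexp :: "complex mat \<Rightarrow> complex mat" where
  "mexp X = mat (dim_row X) (dim_col X)
     (\<lambda>(i,j). \<Sum>k. (X ^\<^sub>m k) $$ (i,j) / of_nat (fact k))"

definition frob2 :: "complex mat \<Rightarrow> real" where
  "frob2 X = (\<Sum>i<dim_row X. \<Sum>j<dim_col X. (cmod (X $$ (i,j)))\<^sup>2)"

definition SU :: "nat \<Rightarrow> complex mat set" where
  "SU n = {Q \<in> carrier_mat n n. Q * cadj Q = 1\<^sub>m n \<and> det Q = 1}"

definition su :: "nat \<Rightarrow> complex mat set" where
  "su n = {X \<in> carrier_mat n n. cadj X = - X \<and> mtrace X = 0}"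

definition eigs :: "complex mat \<Rightarrow> complex multiset" where
  "eigs Q = proots (char_poly Q)"

definition s_mult :: "complex mat \<Rightarrow> nat" where
  "s_mult Q = count (eigs Q) (-1)"

definition zeta :: "complex mat \<Rightarrow> real" where
  "zeta Q = (\<Sum>\<^sub># (image_mset Arg (eigs Q))) / (2 * pi)"

definition m_min :: "nat \<Rightarrow> complex mat \<Rightarrow> real" where
  "m_min n Q = Inf {frob2 X | X. X \<in> su n \<and> mexp X = Q}"

definition Theta :: "nat \<Rightarrow> complex mat \<Rightarrow> complex mat set" where
  "Theta n Q = {X \<in> su n. mexp X = Q \<and> frob2 X = m_min n Q}"

definition su_plog :: "nat \<Rightarrow> complex mat \<Rightarrow> complex mat set" where
  "su_plog n Q = {X \<in> su n. mexp X = Q \<and>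
      (\<forall>l. eigenvalue X l \<longrightarrow> - pi \<le> Im l \<and> Im l \<le> pi)}"

end

theory Submission
  imports Defs "Jordan_Normal_Form.Schur_Decomposition" "HOL-Computational_Algebra.Fundamental_Theorem_Algebra"
begin

lemma cadj_dims[simp]: "dim_row (cadj A) = dim_col A" "dim_col (cadj A) = dim_row A"
  by (auto simp: cadj_def)

lemma cadj_carrier[simp]: "A \<in> carrier_mat nr nc \<Longrightarrow> cadj A \<in> carrier_mat nc nr"
  by (auto simp: cadj_def)

lemma cadj_index[simp]: "i < dim_col A \<Longrightarrow> j < dim_row A \<Longrightarrow> cadj A $$ (i,j) = cnj (A $$ (j,i))"
  by (auto simp: cadj_def)

lemma cadj_cadj[simp]: "cadj (cadj A) = A"
  by (rule eq_matI, auto)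

lemma cadj_mult: assumes "A \<in> carrier_mat n m" "B \<in> carrier_mat m k"
  shows "cadj (A * B) = cadj B * cadj A"
proof (rule eq_matI)
  fix i j assume i: "i < dim_row (cadj B * cadj A)" and j: "j < dim_col (cadj B * cadj A)"
  show "cadj (A * B) $$ (i, j) = (cadj B * cadj A) $$ (i, j)"
    using assms i j by (auto simp: scalar_prod_def mult.commute intro!: sum.cong)
qed (use assms in auto)

lemma cadj_one[simp]: "cadj (1\<^sub>m n) = 1\<^sub>m n"
  by (rule eq_matI, auto)

lemma cadj_uminus: "cadj (- A) = - cadj A"
  by (rule eq_matI, auto)

lemma cadj_add: "A \<in> carrier_mat nr nc \<Longrightarrow> B \<in> carrier_mat nr nc \<Longrightarrow> cadj (A + B) = cadj A + cadj B"
  by (rule eq_matI, auto)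

lemma cadj_smult: "cadj (c \<cdot>\<^sub>m A) = cnj c \<cdot>\<^sub>m cadj A"
  by (rule eq_matI, auto)

definition dmat :: "nat \<Rightarrow> (nat \<Rightarrow> complex) \<Rightarrow> complex mat" where
  "dmat n d = mat n n (\<lambda>(i,j). if i = j then d i else 0)"

lemma dmat_carrier[simp]: "dmat n d \<in> carrier_mat n n"
  and dmat_dims[simp]: "dim_row (dmat n d) = n" "dim_col (dmat n d) = n"
  by (auto simp: dmat_def)

lemma dmat_index[simp]: "i < n \<Longrightarrow> j < n \<Longrightarrow> dmat n d $$ (i,j) = (if i = j then d i else 0)"
  by (auto simp: dmat_def)

lemma dmat_mult: "dmat n d * dmat n e = dmat n (\<lambda>i. d i * e i)"
proof (rule eq_matI)
  fix i j assume i: "i < dim_row (dmat n (\<lambda>i. d i * e i))" and j: "j < dim_col (dmat n (\<lambda>i. d i * e i))"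
  have "(\<Sum>k = 0..<n. (if i = k then d i else 0) * (if k = j then e k else 0)) =
        (\<Sum>k \<in> {i}. (if i = k then d i else 0) * (if k = j then e k else 0))"
    by (rule sum.mono_neutral_right, use i in auto)
  then show "(dmat n d * dmat n e) $$ (i, j) = dmat n (\<lambda>i. d i * e i) $$ (i, j)"
    using i j by (auto simp: scalar_prod_def)
qed auto

lemma cadj_dmat: "cadj (dmat n d) = dmat n (\<lambda>i. cnj (d i))"
  by (rule eq_matI, auto)

lemma dmat_one: "dmat n (\<lambda>_. 1) = 1\<^sub>m n"
  by (rule eq_matI, auto)

lemma dmat_pow: "dmat n d ^\<^sub>m k = dmat n (\<lambda>i. d i ^ k)"
  by (induction k) (auto simp: dmat_one dmat_mult mult.commute)

lemma dmat_ut: "upper_triangular (dmat n d)"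
  by (auto simp: upper_triangular_def)

lemma dmat_diag: "diag_mat (dmat n d) = map d [0..<n]"
  by (auto simp: diag_mat_def)

lemma dmat_cong: "(\<And>i. i < n \<Longrightarrow> d i = e i) \<Longrightarrow> dmat n d = dmat n e"
  by (rule eq_matI, auto)

lemma dmat_inj: assumes "dmat n d = dmat n e" "i < n" shows "d i = e i"
proof -
  have "d i = dmat n d $$ (i,i)" "e i = dmat n e $$ (i,i)" using assms(2) by simp_all
  then show ?thesis using assms(1) by simp
qed

lemma massoc: "A \<in> carrier_mat n n \<Longrightarrow> B \<in> carrier_mat n n \<Longrightarrow> C \<in> carrier_mat n n
   \<Longrightarrow> A * B * C = A * (B * C)"
  by (rule assoc_mult_mat)

lemma msq: "A \<in> carrier_mat n n \<Longrightarrow> B \<in> carrier_mat n n \<Longrightarrow> A * B \<in> carrier_mat n n"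
  by auto

definition unitaryM :: "nat \<Rightarrow> complex mat \<Rightarrow> bool" where
  "unitaryM n U \<longleftrightarrow> U \<in> carrier_mat n n \<and> cadj U * U = 1\<^sub>m n"

lemma unitaryM_carrier: "unitaryM n U \<Longrightarrow> U \<in> carrier_mat n n"
  by (auto simp: unitaryM_def)

lemma unitaryM_left: "unitaryM n U \<Longrightarrow> cadj U * U = 1\<^sub>m n"
  by (auto simp: unitaryM_def)

lemma unitaryM_right: "unitaryM n U \<Longrightarrow> U * cadj U = 1\<^sub>m n"
  unfolding unitaryM_def using mat_mult_left_right_inverse[of "cadj U" n U] by auto

lemma unitaryM_mult: assumes "unitaryM n U" "unitaryM n V" shows "unitaryM n (U * V)"
proof -
  have U: "U \<in> carrier_mat n n" and V: "V \<in> carrier_mat n n" using assms unitaryM_carrier by auto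
  note [simp] = massoc[of _ n] msq[of _ n]
  have "cadj (U * V) * (U * V) = cadj V * (cadj U * U) * V"
    using U V cadj_carrier[OF U] cadj_carrier[OF V] by (simp add: cadj_mult[OF U V])
  also have "\<dots> = 1\<^sub>m n" using assms U V by (simp add: unitaryM_left)
  finally show ?thesis using U V unfolding unitaryM_def by auto
qed

lemma cadj_mult_index: assumes "A \<in> carrier_mat n m" "B \<in> carrier_mat n k" "i < m" "j < k"
  shows "(cadj A * B) $$ (i,j) = col B j \<bullet>c col A i"
  using assms by (auto simp: scalar_prod_def mult.commute intro!: sum.cong)

lemma cscalar_self: fixes w :: "complex vec"
  shows "w \<bullet>c w = of_real (\<Sum>i<dim_vec w. (cmod (w $ i))^2)"
proof -
  have "w \<bullet>c w = (\<Sum>i<dim_vec w. w$i * cnj (w$i))" by (simp add: scalar_prod_def atLeast0LessThan)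
  also have "\<dots> = (\<Sum>i<dim_vec w. of_real ((cmod (w$i))^2))" by (simp only: complex_norm_square)
  finally show ?thesis by simp
qed

lemma unitary_completion:
  fixes v :: "complex vec"
  assumes v: "v \<in> carrier_vec n" and v0: "v \<noteq> 0\<^sub>v n"
  shows "\<exists>W c. unitaryM n W \<and> col W 0 = c \<cdot>\<^sub>v v \<and> 0 < n"
proof -
  interpret cof_vec_space n "TYPE(complex)" .
  define b where "b = basis_completion v"
  define ws where "ws = gram_schmidt n b"
  from basis_completion[OF v v0, folded b_def]
  have dist_b: "distinct b" 
    and indep: "\<not> lin_dep (set b)" and b: "set b \<subseteq> carrier_vec n" and hdb: "hd b = v" 
    and len_b: "length b = n" by auto
  have n: "n \<noteq> 0" using v v0 by auto
  from hdb len_b n obtain vs where bv: "b = v # vs" by (cases b, auto)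
  from gram_schmidt_result[OF b dist_b indep refl, folded ws_def]
  have ws: "set ws \<subseteq> carrier_vec n" "corthogonal ws" "length ws = n" by (auto simp: len_b)
  from gram_schmidt_hd[OF v, of vs, folded bv] have hdws: "hd ws = v" unfolding ws_def .
  define nr where "nr w = complex_of_real (1 / sqrt (\<Sum>i<n. (cmod (w $ i))^2))" for w :: "complex vec"
  define us where "us = map (\<lambda>w. nr w \<cdot>\<^sub>v w) ws"
  define W where "W = mat_of_cols n us"
  have wsc: "\<And>i. i < n \<Longrightarrow> ws ! i \<in> carrier_vec n" using ws by auto
  have usi: "\<And>i. i < n \<Longrightarrow> us ! i = nr (ws ! i) \<cdot>\<^sub>v ws ! i" using ws by (auto simp: us_def)
  have usc: "set us \<subseteq> carrier_vec n" using ws by (auto simp: us_def)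
  have W: "W \<in> carrier_mat n n" using usc ws unfolding W_def us_def by auto
  have colW: "\<And>i. i < n \<Longrightarrow> col W i = us ! i" unfolding W_def
    using usc ws by (intro col_mat_of_cols) (auto simp: us_def)
  have "cadj W * W = 1\<^sub>m n"
  proof (rule eq_matI)
    fix i j assume i: "i < dim_row (1\<^sub>m n)" and j: "j < dim_col (1\<^sub>m n)"
    then have i: "i < n" and j: "j < n" by auto
    have cn: "conjugate (nr w) = nr w" for w unfolding nr_def by simp
    have "(cadj W * W) $$ (i,j) = col W j \<bullet>c col W i" using cadj_mult_index[OF W W i j] .
    also have "\<dots> = nr (ws ! j) * nr (ws ! i) * (ws ! j \<bullet>c ws ! i)"
      unfolding colW[OF i] colW[OF j] usi[OF i] usi[OF j] conjugate_smult_vec cn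
      using wsc[OF i] wsc[OF j] by simp
    also have "\<dots> = (if i = j then 1 else 0)"
    proof (cases "i = j")
      case True
      define r where "r = (\<Sum>k<n. (cmod (ws ! i $ k))^2)"
      have "ws ! i \<bullet>c ws ! i = of_real r" unfolding r_def cscalar_self using wsc[OF i] by simp
      moreover have "ws ! i \<bullet>c ws ! i \<noteq> 0" using corthogonalD[OF ws(2), of i i] ws i by auto
      ultimately have "r \<noteq> 0" by auto
      moreover have "r \<ge> 0" unfolding r_def by (simp add: sum_nonneg)
      ultimately have r: "r > 0" by simp
      have "nr (ws ! i) * nr (ws ! i) * (ws ! i \<bullet>c ws ! i) = of_real ((1 / sqrt r) * (1 / sqrt r) * r)"
        unfolding nr_def r_def[symmetric] \<open>ws ! i \<bullet>c ws ! i = of_real r\<close> by (simp only: of_real_mult)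
      also have "(1 / sqrt r) * (1 / sqrt r) * r = 1" using r
        by (simp add: field_simps)
      finally show ?thesis using True by simp
    next
      case False
      then show ?thesis using corthogonalD[OF ws(2), of j i] ws i j by auto
    qed
    finally show "(cadj W * W) $$ (i, j) = 1\<^sub>m n $$ (i, j)" using i j by simp
  qed (use W in auto)
  moreover have "ws ! 0 = v" using hdws ws(3) n by (metis hd_conv_nth list.size(3))
  then have "col W 0 = nr v \<cdot>\<^sub>v v"
    using colW[of 0] usi[of 0] n by simp
  ultimately show ?thesis using W n unfolding unitaryM_def by blast
qed

definition ext1 :: "complex \<Rightarrow> complex mat \<Rightarrow> complex mat" where
  "ext1 a M = four_block_mat (mat 1 1 (\<lambda>_. a)) (0\<^sub>m 1 (dim_col M)) (0\<^sub>m (dim_row M) 1) M"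

lemma ext1_carrier[simp]: "M \<in> carrier_mat m m \<Longrightarrow> ext1 a M \<in> carrier_mat (Suc m) (Suc m)"
  unfolding ext1_def using four_block_carrier_mat[of "mat 1 1 (\<lambda>_. a)" 1 1 M m m] by auto

lemma ext1_dims[simp]: "dim_row (ext1 a M) = Suc (dim_row M)" "dim_col (ext1 a M) = Suc (dim_col M)"
  unfolding ext1_def by auto

lemma ext1_index: "i < Suc (dim_row M) \<Longrightarrow> j < Suc (dim_col M) \<Longrightarrow>
  ext1 a M $$ (i,j) = (if i = 0 then (if j = 0 then a else 0) else if j = 0 then 0 else M $$ (i - 1, j - 1))"
  unfolding ext1_def by auto

lemma ext1_mult: assumes M: "M \<in> carrier_mat m m" and N: "N \<in> carrier_mat m m"
  shows "ext1 a M * ext1 b N = ext1 (a * b) (M * N)"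
proof -
  have "ext1 a M * ext1 b N = four_block_mat (mat 1 1 (\<lambda>_. a) * mat 1 1 (\<lambda>_. b) + 0\<^sub>m 1 m * 0\<^sub>m m 1)
     (mat 1 1 (\<lambda>_. a) * 0\<^sub>m 1 m + 0\<^sub>m 1 m * N) (0\<^sub>m m 1 * mat 1 1 (\<lambda>_. b) + M * 0\<^sub>m m 1)
     (0\<^sub>m m 1 * 0\<^sub>m 1 m + M * N)"
    unfolding ext1_def using M N by (simp only: carrier_matD) (rule mult_four_block_mat, auto)
  also have "\<dots> = ext1 (a * b) (M * N)" unfolding ext1_def using M N
    by (intro cong_four_block_mat) (auto simp: scalar_prod_def)
  finally show ?thesis .
qed

lemma cadj_ext1: assumes M: "M \<in> carrier_mat m m" shows "cadj (ext1 a M) = ext1 (cnj a) (cadj M)"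
  by (rule eq_matI) (use M in \<open>auto simp: ext1_index cadj_index\<close>)

lemma ext1_one: "ext1 1 (1\<^sub>m m) = 1\<^sub>m (Suc m)"
  by (rule eq_matI) (auto simp: ext1_index)

lemma ext1_dmat: "ext1 a (dmat m d) = dmat (Suc m) (\<lambda>i. if i = 0 then a else d (i - 1))"
  by (rule eq_matI) (auto simp: ext1_index)

lemma ext1_inj: assumes "ext1 a M = ext1 b N" "M \<in> carrier_mat m m" "N \<in> carrier_mat m m"
  shows "M = N"
proof (rule eq_matI)
  fix i j assume i: "i < dim_row N" and j: "j < dim_col N"
  have "M $$ (i,j) = ext1 a M $$ (Suc i, Suc j)" using assms(2,3) i j by (simp add: ext1_index)
  also have "\<dots> = ext1 b N $$ (Suc i, Suc j)" by (simp only: assms(1))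
  also have "\<dots> = N $$ (i,j)" using assms i j by (simp add: ext1_index)
  finally show "M $$ (i,j) = N $$ (i,j)" .
qed (use assms in auto)

lemma unitaryM_ext1: "unitaryM m U \<Longrightarrow> unitaryM (Suc m) (ext1 1 U)"
  unfolding unitaryM_def by (auto simp: cadj_ext1 ext1_mult[OF cadj_carrier] ext1_one)

lemma normal_first_row:
  fixes A :: "complex mat"
  assumes A: "A \<in> carrier_mat n n" and nrm: "A * cadj A = cadj A * A" and n: "0 < n"
    and col0: "\<And>i. 0 < i \<Longrightarrow> i < n \<Longrightarrow> A $$ (i,0) = 0"
    and j: "0 < j" "j < n"
  shows "A $$ (0,j) = 0"
proof -
  define f where "f j = (cmod (A $$ (0,j)))^2" for j
  have cA: "cadj A \<in> carrier_mat n n" using A by simp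
  have "(A * cadj A) $$ (0,0) = (cadj (cadj A) * cadj A) $$ (0,0)" by simp
  also have "\<dots> = col (cadj A) 0 \<bullet>c col (cadj A) 0" by (rule cadj_mult_index[OF cA cA n n])
  also have "\<dots> = of_real (\<Sum>k<n. f k)" unfolding cscalar_self f_def using A n
    by (auto intro!: sum.cong)
  finally have e1: "(A * cadj A) $$ (0,0) = of_real (\<Sum>k<n. f k)" .
  have "(cadj A * A) $$ (0,0) = col A 0 \<bullet>c col A 0" by (rule cadj_mult_index[OF A A n n])
  also have "\<dots> = of_real (\<Sum>k<n. (cmod (A $$ (k,0)))^2)" unfolding cscalar_self using A n
    by (auto intro!: sum.cong)
  also have "(\<Sum>k<n. (cmod (A $$ (k,0)))^2) = (\<Sum>k\<in>{0}. (cmod (A $$ (k,0)))^2)"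
    by (rule sum.mono_neutral_right) (use n col0 in auto)
  finally have e2: "(cadj A * A) $$ (0,0) = of_real (f 0)" unfolding f_def by simp
  from e1 e2 nrm have "complex_of_real (\<Sum>k<n. f k) = complex_of_real (f 0)" by metis
  then have s: "(\<Sum>k<n. f k) = f 0" by (simp only: of_real_eq_iff)
  have "(\<Sum>k<n. f k) = f 0 + (\<Sum>k\<in>{..<n} - {0}. f k)"
    using n by (simp add: sum.remove)
  with s have "(\<Sum>k\<in>{..<n} - {0}. f k) = 0" by simp
  then have "f j = 0" using j by (subst (asm) sum_nonneg_eq_0_iff) (auto simp: f_def)
  then show ?thesis by (simp add: f_def)
qed

lemma spectral:
  fixes A :: "complex mat"
  assumes "A \<in> carrier_mat n n" "A * cadj A = cadj A * A"
  shows "\<exists>U d. unitaryM n U \<and> A = U * dmat n d * cadj U"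
  using assms
proof (induction n arbitrary: A)
  case 0
  have "A = 1\<^sub>m 0 * dmat 0 (\<lambda>_. 0) * cadj (1\<^sub>m 0)" by (rule eq_matI) (use 0 in auto)
  moreover have "unitaryM 0 (1\<^sub>m 0)" unfolding unitaryM_def by simp
  ultimately show ?case by blast
next
  case (Suc m)
  note [simp] = massoc[of _ "Suc m"] msq[of _ "Suc m"]
  have A: "A \<in> carrier_mat (Suc m) (Suc m)" using Suc by simp
  have "degree (char_poly A) = Suc m" using degree_monic_char_poly[OF A] by simp
  then have "\<not> constant (poly (char_poly A))" by (simp add: constant_degree)
  then obtain e where "poly (char_poly A) e = 0" using fundamental_theorem_of_algebra by blast
  then have "eigenvalue A e" using eigenvalue_root_char_poly[OF A] by simp
  then obtain v where v: "v \<in> carrier_vec (Suc m)" "v \<noteq> 0\<^sub>v (Suc m)" "A *\<^sub>v v = e \<cdot>\<^sub>v v"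
    unfolding eigenvalue_def eigenvector_def using A by auto
  obtain W c where W: "unitaryM (Suc m) W" and cW: "col W 0 = c \<cdot>\<^sub>v v"
    using unitary_completion[OF v(1,2)] by blast
  have Wc: "W \<in> carrier_mat (Suc m) (Suc m)" using W unitaryM_carrier by blast
  have cWc: "cadj W \<in> carrier_mat (Suc m) (Suc m)" using Wc by simp
  have cA: "cadj A \<in> carrier_mat (Suc m) (Suc m)" using A by simp
  define B where "B = cadj W * A * W"
  have B: "B \<in> carrier_mat (Suc m) (Suc m)" unfolding B_def using Wc cWc A by simp
  have cB: "cadj B = cadj W * cadj A * W"
  proof -
    have "cadj B = cadj W * cadj (cadj W * A)" unfolding B_def by (rule cadj_mult) (use cWc A Wc in auto)
    also have "cadj (cadj W * A) = cadj A * W" by (subst cadj_mult[OF cWc A]) simp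
    finally show ?thesis using cWc cA Wc by simp
  qed
  have WW: "W * cadj W = 1\<^sub>m (Suc m)" using unitaryM_right[OF W] .
  have WW': "cadj W * W = 1\<^sub>m (Suc m)" using unitaryM_left[OF W] .
  have "B * cadj B = cadj W * (A * ((W * cadj W) * (cadj A * W)))"
    unfolding cB unfolding B_def using Wc cWc A cA by simp
  also have "\<dots> = cadj W * (A * cadj A) * W" using Wc cWc A cA by (simp add: WW)
  also have "\<dots> = cadj W * (cadj A * A) * W" using Suc.prems by simp
  also have "\<dots> = cadj W * (cadj A * ((W * cadj W) * (A * W)))" using Wc cWc A cA by (simp add: WW)
  also have "\<dots> = cadj B * B" unfolding cB unfolding B_def using Wc cWc A cA by simp
  finally have Bn: "B * cadj B = cadj B * B" .
  have colB: "col B 0 = e \<cdot>\<^sub>v unit_vec (Suc m) 0"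
  proof -
    have "col B 0 = cadj W *\<^sub>v (A *\<^sub>v col W 0)" unfolding B_def
      using Wc cWc A col_mult2[OF cWc _, of "A * W" "Suc m" 0] col_mult2[OF A Wc, of 0] by simp
    also have "\<dots> = e \<cdot>\<^sub>v (cadj W *\<^sub>v col W 0)" unfolding cW
      using mult_mat_vec[OF A v(1)] mult_mat_vec[OF cWc v(1)] mult_mat_vec[OF cWc, of "e \<cdot>\<^sub>v v"] v
        mult_mat_vec[OF cWc, of "c \<cdot>\<^sub>v v"]
      by (simp add: smult_smult_assoc mult.commute)
    also have "cadj W *\<^sub>v col W 0 = col (cadj W * W) 0" using col_mult2[OF cWc Wc, of 0] by simp
    also have "\<dots> = unit_vec (Suc m) 0" unfolding WW' by simp
    finally show ?thesis .
  qed
  have Bcol: "B $$ (i, 0) = (if i = 0 then e else 0)" if "i < Suc m" for i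
  proof -
    have "B $$ (i,0) = col B 0 $ i" using B that by simp
    then show ?thesis unfolding colB using that by simp
  qed
  have Brow: "B $$ (0, j) = 0" if "0 < j" "j < Suc m" for j
    using normal_first_row[OF B Bn _ _ that] Bcol by simp
  define B3 where "B3 = mat m m (\<lambda>(i,j). B $$ (Suc i, Suc j))"
  have B3: "B3 \<in> carrier_mat m m" unfolding B3_def by simp
  have BB3: "B = ext1 e B3"
    by (rule eq_matI) (use B B3 Bcol Brow in \<open>auto simp: ext1_index B3_def\<close>)
  have h1: "B * cadj B = ext1 (e * cnj e) (B3 * cadj B3)" unfolding BB3
    by (simp only: cadj_ext1[OF B3] ext1_mult[OF B3 cadj_carrier[OF B3]])
  have h2: "cadj B * B = ext1 (cnj e * e) (cadj B3 * B3)" unfolding BB3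
    by (simp only: cadj_ext1[OF B3] ext1_mult[OF cadj_carrier[OF B3] B3])
  have "ext1 (e * cnj e) (B3 * cadj B3) = ext1 (cnj e * e) (cadj B3 * B3)"
    unfolding h1[symmetric] h2[symmetric] by (rule Bn)
  then have "B3 * cadj B3 = cadj B3 * B3"
    by (rule ext1_inj[OF _ msq[OF B3 cadj_carrier[OF B3]] msq[OF cadj_carrier[OF B3] B3]])
  from Suc.IH[OF B3 this] obtain U3 d3 where U3: "unitaryM m U3" and B3U: "B3 = U3 * dmat m d3 * cadj U3"
    by blast
  have U3c: "U3 \<in> carrier_mat m m" using U3 unitaryM_carrier by blast
  define d where "d i = (if i = 0 then e else d3 (i - 1))" for i
  define U where "U = W * ext1 1 U3"
  have U: "unitaryM (Suc m) U" unfolding U_def by (intro unitaryM_mult W unitaryM_ext1 U3)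
  have E: "ext1 1 U3 \<in> carrier_mat (Suc m) (Suc m)" using U3c by simp
  have "B = ext1 1 U3 * dmat (Suc m) d * cadj (ext1 1 U3)"
    unfolding BB3 B3U d_def ext1_dmat[symmetric] using U3c
    by (simp add: cadj_ext1 ext1_mult[OF U3c dmat_carrier] ext1_mult[OF _ cadj_carrier[OF U3c]])
  moreover have "A = W * B * cadj W" unfolding B_def using Wc cWc A
    by (simp add: WW flip: massoc[of W "Suc m" "cadj W"] massoc[of "W * cadj W" "Suc m"])
  ultimately have "A = W * (ext1 1 U3 * dmat (Suc m) d * cadj (ext1 1 U3)) * cadj W" by simp
  also have "\<dots> = U * dmat (Suc m) d * cadj U" unfolding U_def
    using Wc cWc E by (simp add: cadj_mult[OF Wc E])
  finally show ?case using U by blast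
qed

lemma exp_sums': "(\<lambda>k. x ^ k / of_nat (fact k)) sums exp (x::complex)"
proof -
  have "(\<lambda>k. x ^ k / of_nat (fact k)) = (\<lambda>k. x ^ k /\<^sub>R fact k)"
    by (rule ext) (simp add: scaleR_conv_of_real divide_inverse mult.commute)
  with exp_converges show ?thesis by simp
qed

lemma mtrace_comm: assumes A: "A \<in> carrier_mat n m" and B: "B \<in> carrier_mat m n"
  shows "mtrace (A * B) = mtrace (B * A)"
proof -
  have "mtrace (A * B) = (\<Sum>i<n. \<Sum>k<m. A $$ (i,k) * B $$ (k,i))"
    unfolding mtrace_def using A B by (auto simp: scalar_prod_def atLeast0LessThan intro!: sum.cong)
  also have "\<dots> = (\<Sum>k<m. \<Sum>i<n. B $$ (k,i) * A $$ (i,k))"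
    by (subst sum.swap) (simp add: mult.commute)
  also have "\<dots> = mtrace (B * A)"
    unfolding mtrace_def using A B by (auto simp: scalar_prod_def atLeast0LessThan intro!: sum.cong)
  finally show ?thesis .
qed

lemma mtrace_dmat: "mtrace (dmat n d) = (\<Sum>i<n. d i)"
  unfolding mtrace_def by simp

lemma frob2_mtrace: assumes A: "A \<in> carrier_mat nr nc"
  shows "of_real (frob2 A) = mtrace (A * cadj A)"
proof -
  have "mtrace (A * cadj A) = (\<Sum>i<nr. \<Sum>j<nc. A $$ (i,j) * cnj (A $$ (i,j)))"
    unfolding mtrace_def using A by (auto simp: scalar_prod_def atLeast0LessThan intro!: sum.cong)
  also have "\<dots> = (\<Sum>i<nr. \<Sum>j<nc. of_real ((cmod (A $$ (i,j)))^2))"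
    by (simp only: complex_norm_square)
  also have "\<dots> = of_real (frob2 A)" unfolding frob2_def using A by simp
  finally show ?thesis by simp
qed

lemma prod_linear_proots:
  "proots (\<Prod>a\<leftarrow>map d [0..<n]. [:- a, 1:]) = mset (map d [0..<n])"
proof (induction n)
  case 0 then show ?case by simp
next
  case (Suc n)
  have nz: "(\<Prod>a\<leftarrow>map d [0..<n]. [:- a, 1:]) \<noteq> 0"
    by (auto simp: prod_list_zero_iff)
  have "(\<Prod>a\<leftarrow>map d [0..<Suc n]. [:- a, 1:]) = (\<Prod>a\<leftarrow>map d [0..<n]. [:- a, 1:]) * [:- d n, 1:]"
    by simp
  also have "proots \<dots> = proots (\<Prod>a\<leftarrow>map d [0..<n]. [:- a, 1:]) + {# d n #}"
    using nz by (subst proots_mult) (auto simp del: proots_linear_factor, simp)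
  finally show ?case using Suc by simp
qed

context
  fixes n :: nat and U :: "complex mat"
  assumes U: "unitaryM n U"
begin

private lemma Uc: "U \<in> carrier_mat n n" using U unitaryM_carrier by blast
private lemma cUc: "cadj U \<in> carrier_mat n n" using Uc by simp
private lemma UU: "U * cadj U = 1\<^sub>m n" using unitaryM_right[OF U] .
private lemma UU': "cadj U * U = 1\<^sub>m n" using unitaryM_left[OF U] .

lemma conj_carrier: "U * dmat n d * cadj U \<in> carrier_mat n n"
  using msq[OF msq[OF Uc dmat_carrier] cUc] .

lemma conj_mult: "(U * dmat n d * cadj U) * (U * dmat n e * cadj U) = U * dmat n (\<lambda>i. d i * e i) * cadj U"
proof -
  note [simp] = massoc[of _ n] msq[of _ n]
  have "(U * dmat n d * cadj U) * (U * dmat n e * cadj U) = U * (dmat n d * ((cadj U * U) * (dmat n e * cadj U)))"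
    using Uc cUc by simp
  also have "\<dots> = U * (dmat n d * (dmat n e * cadj U))" using Uc cUc by (simp add: UU')
  also have "dmat n d * (dmat n e * cadj U) = dmat n (\<lambda>i. d i * e i) * cadj U"
    by (simp only: massoc[OF dmat_carrier dmat_carrier cUc, symmetric] dmat_mult)
  also have "U * (dmat n (\<lambda>i. d i * e i) * cadj U) = U * dmat n (\<lambda>i. d i * e i) * cadj U"
    using Uc cUc by simp
  finally show ?thesis .
qed

lemma conj_cadj: "cadj (U * dmat n d * cadj U) = U * dmat n (\<lambda>i. cnj (d i)) * cadj U"
proof -
  have "cadj (U * dmat n d * cadj U) = cadj (cadj U) * cadj (U * dmat n d)"
    by (rule cadj_mult[of _ n n]) (use Uc cUc in auto)
  also have "cadj (U * dmat n d) = cadj (dmat n d) * cadj U" by (rule cadj_mult[OF Uc dmat_carrier])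
  finally show ?thesis using Uc cUc by (simp add: cadj_dmat massoc[of _ n])
qed

lemma conj_char_poly: "char_poly (U * dmat n d * cadj U) = (\<Prod>a\<leftarrow>map d [0..<n]. [:- a, 1:])"
proof -
  have "similar_mat_wit (U * dmat n d * cadj U) (dmat n d) U (cadj U)"
    unfolding similar_mat_wit_def Let_def using Uc cUc UU UU' conj_carrier[of d] by auto
  then have "similar_mat (U * dmat n d * cadj U) (dmat n d)" unfolding similar_mat_def by blast
  then have "char_poly (U * dmat n d * cadj U) = char_poly (dmat n d)" by (rule char_poly_similar)
  also have "\<dots> = (\<Prod>a\<leftarrow>map d [0..<n]. [:- a, 1:])"
    using char_poly_upper_triangular[OF dmat_carrier dmat_ut] by (simp add: dmat_diag)
  finally show ?thesis .
qed

lemma conj_eigs: "eigs (U * dmat n d * cadj U) = mset (map d [0..<n])"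
  unfolding eigs_def conj_char_poly by (rule prod_linear_proots)

lemma conj_eigenvalue: "eigenvalue (U * dmat n d * cadj U) l \<longleftrightarrow> (\<exists>i<n. l = d i)"
proof -
  have nz: "char_poly (U * dmat n d * cadj U) \<noteq> 0"
    unfolding conj_char_poly by (auto simp: prod_list_zero_iff)
  have "eigenvalue (U * dmat n d * cadj U) l \<longleftrightarrow> l \<in> set_mset (eigs (U * dmat n d * cadj U))"
    unfolding eigenvalue_root_char_poly[OF conj_carrier] eigs_def using set_count_proots[OF nz] by auto
  also have "\<dots> \<longleftrightarrow> (\<exists>i<n. l = d i)" unfolding conj_eigs by auto
  finally show ?thesis .
qed

lemma conj_mtrace: "mtrace (U * dmat n d * cadj U) = (\<Sum>i<n. d i)"
proof -
  have "mtrace (U * dmat n d * cadj U) = mtrace (cadj U * (U * dmat n d))"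
    by (rule mtrace_comm[of _ n n]) (use Uc cUc in auto)
  also have "cadj U * (U * dmat n d) = dmat n d"
    using Uc cUc by (simp add: UU' flip: massoc[of _ n])
  finally show ?thesis by (simp add: mtrace_dmat)
qed

lemma conj_frob2: "frob2 (U * dmat n d * cadj U) = (\<Sum>i<n. (cmod (d i))^2)"
proof -
  have "of_real (frob2 (U * dmat n d * cadj U)) = mtrace ((U * dmat n d * cadj U) * cadj (U * dmat n d * cadj U))"
    by (rule frob2_mtrace[OF conj_carrier])
  also have "\<dots> = mtrace (U * dmat n (\<lambda>i. d i * cnj (d i)) * cadj U)" by (simp add: conj_cadj conj_mult)
  also have "\<dots> = (\<Sum>i<n. d i * cnj (d i))" by (simp add: conj_mtrace)
  also have "\<dots> = (\<Sum>i<n. of_real ((cmod (d i))^2))" by (simp only: complex_norm_square)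
  finally show ?thesis by (metis of_real_eq_iff of_real_sum)
qed

lemma conj_det: "det (U * dmat n d * cadj U) = (\<Prod>i<n. d i)"
proof -
  have "det (U * dmat n d * cadj U) = det U * det (dmat n d) * det (cadj U)"
    using Uc cUc by (simp add: det_mult[of _ n])
  also have "det U * det (cadj U) = 1" using det_mult[OF Uc cUc] UU by simp
  then have "det U * det (dmat n d) * det (cadj U) = det (dmat n d)" by (simp add: algebra_simps)
  also have "det (dmat n d) = (\<Prod>i<n. d i)"
    using det_upper_triangular[OF dmat_ut dmat_carrier] by (simp add: prod_list_diag_prod atLeast0LessThan)
  finally show ?thesis .
qed

lemma conj_pow: "(U * dmat n d * cadj U) ^\<^sub>m k = U * dmat n (\<lambda>i. d i ^ k) * cadj U"
proof (induction k)
  case 0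
  have "U * dmat n (\<lambda>i. d i ^ 0) * cadj U = 1\<^sub>m n" using Uc by (simp add: dmat_one UU)
  then show ?case using conj_carrier[of d] Uc by simp
next
  case (Suc k)
  then show ?case by (simp add: conj_mult mult.commute)
qed

lemma conj_index: "i < n \<Longrightarrow> j < n \<Longrightarrow>
   (U * dmat n d * cadj U) $$ (i,j) = (\<Sum>a<n. U $$ (i,a) * d a * cnj (U $$ (j,a)))"
proof -
  assume i: "i < n" and j: "j < n"
  have "(U * dmat n d * cadj U) $$ (i,j) = (\<Sum>b<n. (\<Sum>a<n. U $$ (i,a) * (if a = b then d a else 0)) * cnj (U $$ (j,b)))"
    using Uc i j by (auto simp: scalar_prod_def atLeast0LessThan intro!: sum.cong)
  also have "\<dots> = (\<Sum>b<n. U $$ (i,b) * d b * cnj (U $$ (j,b)))"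
  proof (rule sum.cong)
    fix b assume b: "b \<in> {..<n}"
    have "(\<Sum>a<n. U $$ (i,a) * (if a = b then d a else 0)) = (\<Sum>a\<in>{b}. U $$ (i,a) * (if a = b then d a else 0))"
      by (rule sum.mono_neutral_right) (use b in auto)
    then show "(\<Sum>a<n. U $$ (i,a) * (if a = b then d a else 0)) * cnj (U $$ (j,b)) = U $$ (i,b) * d b * cnj (U $$ (j,b))"
      by simp
  qed simp
  finally show ?thesis .
qed

lemma conj_mexp: "mexp (U * dmat n d * cadj U) = U * dmat n (\<lambda>i. exp (d i)) * cadj U"
proof (rule eq_matI)
  fix i j assume "i < dim_row (U * dmat n (\<lambda>i. exp (d i)) * cadj U)" "j < dim_col (U * dmat n (\<lambda>i. exp (d i)) * cadj U)"
  then have i: "i < n" and j: "j < n" using Uc by auto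
  have "(\<lambda>k. ((U * dmat n d * cadj U) ^\<^sub>m k) $$ (i,j) / of_nat (fact k))
      = (\<lambda>k. \<Sum>a<n. U $$ (i,a) * cnj (U $$ (j,a)) * (d a ^ k / of_nat (fact k)))"
    unfolding conj_pow conj_index[OF i j] by (auto simp: sum_divide_distrib intro!: sum.cong)
  moreover have "(\<lambda>k. \<Sum>a<n. U $$ (i,a) * cnj (U $$ (j,a)) * (d a ^ k / of_nat (fact k)))
      sums (\<Sum>a<n. U $$ (i,a) * cnj (U $$ (j,a)) * exp (d a))"
    by (intro sums_sum sums_mult exp_sums')
  ultimately have "(\<lambda>k. ((U * dmat n d * cadj U) ^\<^sub>m k) $$ (i,j) / of_nat (fact k))
      sums (U * dmat n (\<lambda>i. exp (d i)) * cadj U) $$ (i,j)"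
    unfolding conj_index[OF i j] by (simp add: ac_simps)
  then show "mexp (U * dmat n d * cadj U) $$ (i, j) = (U * dmat n (\<lambda>i. exp (d i)) * cadj U) $$ (i, j)"
    unfolding mexp_def using i j conj_carrier[of d] Uc by (simp add: sums_iff)
qed (use Uc in \<open>auto simp: mexp_def\<close>)

end

lemma cis_minus_pi: "cis (- pi) = - 1"
  by (simp add: complex_eq_iff)

lemma Arg_cis_range: assumes "- pi \<le> t" "t \<le> pi"
  shows "Arg (cis t) = (if t = - pi then pi else t)"
proof (cases "t = - pi")
  case True
  then have "cis t = cis pi" by (simp add: cis_minus_pi cis_pi)
  then show ?thesis using True Arg_cis[of pi] by simp
next
  case False
  then show ?thesis using assms Arg_cis[of t] by simp
qed

lemma Arg_cis_sq_le: "(Arg (cis t))^2 \<le> t^2"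
proof (cases "- pi \<le> t \<and> t \<le> pi")
  case True
  then show ?thesis using Arg_cis_range[of t] by auto
next
  case False
  then have "pi < \<bar>t\<bar>" by auto
  moreover have "\<bar>Arg (cis t)\<bar> \<le> pi" using Arg_bounded[of "cis t"] by auto
  ultimately have "\<bar>Arg (cis t)\<bar> \<le> \<bar>t\<bar>" by simp
  then show ?thesis by (simp add: abs_le_square_iff)
qed

lemma cis_eq_int: assumes "cis t = cis a" shows "\<exists>k::int. t = a + 2 * pi * of_int k"
proof -
  have "exp (\<i> * complex_of_real (t - a)) = cis (t - a)"
    by (simp only: cis_conv_exp)
  also have "\<dots> = cis t / cis a" by (simp add: cis_divide)
  also have "\<dots> = 1" using assms by simp
  finally obtain k :: int where "Im (\<i> * complex_of_real (t - a)) = real_of_int (2 * k) * pi"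
    unfolding exp_eq_1 by blast
  then show ?thesis by (intro exI[of _ k]) (simp add: algebra_simps)
qed

definition gapf :: "real \<Rightarrow> real" where
  "gapf a = (if a = pi then 9 * pi^2 else (2 * pi - \<bar>a\<bar>)^2)"

lemma gapf_pos: assumes "- pi < a" "a \<le> pi" shows "a^2 < gapf a"
proof (cases "a = pi")
  case True
  then show ?thesis using pi_gt_zero by (simp add: gapf_def power2_eq_square)
next
  case False
  then have "\<bar>a\<bar> < 2 * pi - \<bar>a\<bar>" using assms by auto
  then have "\<bar>a\<bar>^2 < (2 * pi - \<bar>a\<bar>)^2" by (intro power_strict_mono) auto
  then show ?thesis using False by (simp add: gapf_def)
qed

lemma Arg_cis_gap: assumes "pi < \<bar>t\<bar>" shows "gapf (Arg (cis t)) \<le> t^2"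
proof -
  define a where "a = Arg (cis t)"
  have ab: "- pi < a" "a \<le> pi" using Arg_bounded[of "cis t"] unfolding a_def by auto
  have "cis a = cis t" unfolding a_def by (simp add: cis_Arg complex_sgn_def norm_cis)
  then obtain k :: int where tk0: "t = a + 2 * pi * of_int k" using cis_eq_int by metis
  define u where "u = 2 * pi * of_int k"
  have tk: "t = a + u" using tk0 u_def by simp
  define h where "h = (if a = pi then 3 * pi else 2 * pi - \<bar>a\<bar>)"
  have h0: "0 \<le> h" using ab pi_gt_zero by (auto simp: h_def)
  have "h \<le> \<bar>t\<bar>"
  proof -
    consider "k \<ge> 1" | "k = 0" | "k = -1" | "k \<le> -2" by linarith
    then show ?thesis
    proof cases
      case 1
      then have "(2 * pi) * of_int k \<ge> (2 * pi) * 1" using pi_gt_zero by (intro mult_left_mono) auto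
      then have pk: "u \<ge> 2 * pi" unfolding u_def by simp
      show ?thesis unfolding h_def using tk ab pi_gt_zero pk by (smt (verit))
    next
      case 2
      then show ?thesis using tk ab assms u_def by auto
    next
      case 3
      then have "u = - 2 * pi" unfolding u_def by simp
      then show ?thesis unfolding h_def using tk ab assms pi_gt_zero by (smt (verit))
    next
      case 4
      then have "(2 * pi) * of_int k \<le> (2 * pi) * (-2)" using pi_gt_zero by (intro mult_left_mono) auto
      then have pk: "u \<le> - 4 * pi" unfolding u_def by simp
      show ?thesis unfolding h_def using tk ab pi_gt_zero pk by (smt (verit))
    qed
  qed
  then have "h^2 \<le> t^2" using h0 by (simp add: abs_le_square_iff[symmetric])
  moreover have "gapf a = h^2" by (auto simp: gapf_def h_def power2_eq_square)
  ultimately show ?thesis unfolding a_def by simp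
qed

lemma msum_map: "sum_mset (image_mset f (mset (map g [0..<n]))) = (\<Sum>i<n. f (g i))"
  by (induction n) (simp_all add: add.commute)

lemma mcount_map: "count (mset (map g [0..<n])) x = card {i. i < n \<and> g i = x}"
proof (induction n)
  case 0 then show ?case by simp
next
  case (Suc n)
  show ?case
  proof (cases "g n = x")
    case True
    then have "{i. i < Suc n \<and> g i = x} = insert n {i. i < n \<and> g i = x}" by auto
    then show ?thesis using Suc True by simp
  next
    case False
    then have "{i. i < Suc n \<and> g i = x} = {i. i < n \<and> g i = x}" using less_Suc_eq by auto
    then show ?thesis using Suc False by simp
  qed
qed

lemma conj_back: assumes U: "unitaryM n U" and D: "D \<in> carrier_mat n n"
  shows "cadj U * (U * D * cadj U) * U = D"
proof -
  have Uc: "U \<in> carrier_mat n n" and cUc: "cadj U \<in> carrier_mat n n" using U unitaryM_carrier by auto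
  note [simp] = massoc[of _ n] msq[of _ n]
  have "cadj U * (U * D * cadj U) * U = (cadj U * U) * (D * (cadj U * U))" using Uc cUc D by simp
  then show ?thesis using unitaryM_left[OF U] D by simp
qed

lemma dmat_uminus: "- dmat n d = dmat n (\<lambda>i. - d i)"
  by (rule eq_matI) auto

lemma su_analyze:
  assumes X: "X \<in> su n"
  obtains U \<theta> where "unitaryM n U" "X = U * dmat n (\<lambda>i. \<i> * of_real (\<theta> i)) * cadj U"
proof -
  have Xc: "X \<in> carrier_mat n n" and aX: "cadj X = - X" using X by (auto simp: su_def)
  have "X * cadj X = cadj X * X" using aX Xc by simp
  from spectral[OF Xc this] obtain U d where U: "unitaryM n U" and Xd: "X = U * dmat n d * cadj U" by blast
  have Uc: "U \<in> carrier_mat n n" and cUc: "cadj U \<in> carrier_mat n n" using U unitaryM_carrier by auto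
  have "dmat n (\<lambda>i. cnj (d i)) = cadj U * cadj X * U"
    unfolding Xd conj_cadj[OF U] using conj_back[OF U dmat_carrier] by simp
  also have "\<dots> = - (cadj U * X * U)" unfolding aX
    using carrier_matD[OF Uc] carrier_matD[OF cUc] carrier_matD[OF Xc] by simp
  also have "cadj U * X * U = dmat n d" unfolding Xd using conj_back[OF U dmat_carrier] by simp
  finally have "dmat n (\<lambda>i. cnj (d i)) = dmat n (\<lambda>i. - d i)" by (simp add: dmat_uminus)
  then have "\<And>i. i < n \<Longrightarrow> cnj (d i) = - d i" by (rule dmat_inj)
  then have "\<And>i. i < n \<Longrightarrow> d i = \<i> * of_real (Im (d i))" by (auto simp: complex_eq_iff)
  then have "X = U * dmat n (\<lambda>i. \<i> * of_real (Im (d i))) * cadj U" unfolding Xd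
    by (metis dmat_cong)
  then show ?thesis by (rule that[OF U])
qed

context
  fixes n :: nat and U :: "complex mat" and \<theta> :: "nat \<Rightarrow> real"
  assumes U: "unitaryM n U"
begin

lemma th_mexp: "mexp (U * dmat n (\<lambda>i. \<i> * of_real (\<theta> i)) * cadj U) = U * dmat n (\<lambda>i. cis (\<theta> i)) * cadj U"
  unfolding conj_mexp[OF U] by (simp add: cis_conv_exp)

lemma th_eigs: "eigs (mexp (U * dmat n (\<lambda>i. \<i> * of_real (\<theta> i)) * cadj U)) = mset (map (\<lambda>i. cis (\<theta> i)) [0..<n])"
  unfolding th_mexp conj_eigs[OF U] ..

lemma th_frob2: "frob2 (U * dmat n (\<lambda>i. \<i> * of_real (\<theta> i)) * cadj U) = (\<Sum>i<n. (\<theta> i)^2)"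
  unfolding conj_frob2[OF U] by (simp add: norm_mult)

lemma th_eig_bound: "(\<forall>l. eigenvalue (U * dmat n (\<lambda>i. \<i> * of_real (\<theta> i)) * cadj U) l \<longrightarrow> - pi \<le> Im l \<and> Im l \<le> pi)
   \<longleftrightarrow> (\<forall>i<n. - pi \<le> \<theta> i \<and> \<theta> i \<le> pi)"
  unfolding conj_eigenvalue[OF U] by auto

lemma th_su: "U * dmat n (\<lambda>i. \<i> * of_real (\<theta> i)) * cadj U \<in> su n \<longleftrightarrow> (\<Sum>i<n. \<theta> i) = 0"
proof -
  have Uc: "U \<in> carrier_mat n n" and cUc: "cadj U \<in> carrier_mat n n" using U unitaryM_carrier by auto
  have "cadj (U * dmat n (\<lambda>i. \<i> * of_real (\<theta> i)) * cadj U) = U * dmat n (\<lambda>i. - (\<i> * of_real (\<theta> i))) * cadj U"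
    unfolding conj_cadj[OF U] by simp
  also have "\<dots> = - (U * dmat n (\<lambda>i. \<i> * of_real (\<theta> i)) * cadj U)"
    using carrier_matD[OF Uc] carrier_matD[OF cUc] by (simp flip: dmat_uminus)
  finally have a: "cadj (U * dmat n (\<lambda>i. \<i> * of_real (\<theta> i)) * cadj U) = - (U * dmat n (\<lambda>i. \<i> * of_real (\<theta> i)) * cadj U)" .
  have "mtrace (U * dmat n (\<lambda>i. \<i> * of_real (\<theta> i)) * cadj U) = \<i> * of_real (\<Sum>i<n. \<theta> i)"
    unfolding conj_mtrace[OF U] by (simp add: sum_distrib_left)
  then show ?thesis unfolding su_def using a conj_carrier[OF U] by (simp flip: of_real_sum)
qed

end

lemma SU_diag:
  assumes Q: "Q \<in> SU n"
  obtains V \<mu> where "unitaryM n V" "Q = V * dmat n \<mu> * cadj V" "\<And>i. i < n \<Longrightarrow> cmod (\<mu> i) = 1"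
    "(\<Prod>i<n. \<mu> i) = 1"
proof -
  have Qc: "Q \<in> carrier_mat n n" and QQ: "Q * cadj Q = 1\<^sub>m n" and dQ: "det Q = 1"
    using Q by (auto simp: SU_def)
  have QQ': "cadj Q * Q = 1\<^sub>m n" using mat_mult_left_right_inverse[OF Qc _ QQ] Qc by simp
  from spectral[OF Qc] QQ QQ' obtain V \<mu> where V: "unitaryM n V" and Qd: "Q = V * dmat n \<mu> * cadj V"
    by auto
  have "V * dmat n (\<lambda>i. \<mu> i * cnj (\<mu> i)) * cadj V = V * dmat n (\<lambda>_. 1) * cadj V"
    using QQ unfolding Qd conj_cadj[OF V] conj_mult[OF V] dmat_one
    using unitaryM_right[OF V] unitaryM_carrier[OF V] by simp
  then have "cadj V * (V * dmat n (\<lambda>i. \<mu> i * cnj (\<mu> i)) * cadj V) * V = cadj V * (V * dmat n (\<lambda>_. 1) * cadj V) * V"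
    by simp
  then have "dmat n (\<lambda>i. \<mu> i * cnj (\<mu> i)) = dmat n (\<lambda>_. 1)" unfolding conj_back[OF V dmat_carrier] .
  then have "\<And>i. i < n \<Longrightarrow> \<mu> i * cnj (\<mu> i) = 1" by (rule dmat_inj)
  then have m1: "cmod (\<mu> i) = 1" if i: "i < n" for i
  proof -
    have "complex_of_real ((cmod (\<mu> i))^2) = 1" using \<open>i < n \<Longrightarrow> \<mu> i * cnj (\<mu> i) = 1\<close> i
      by (simp only: complex_norm_square)
    then have "(cmod (\<mu> i))^2 = 1" by (simp only: of_real_eq_1_iff)
    then show ?thesis using norm_ge_zero[of "\<mu> i"] by (simp add: power2_eq_1_iff)
  qed
  have "(\<Prod>i<n. \<mu> i) = 1" using dQ unfolding Qd conj_det[OF V] .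
  then show ?thesis using that V Qd m1 by blast
qed

lemma cis_sum: "cis (\<Sum>i<(n::nat). f i) = (\<Prod>i<n. cis (f i))"
  by (induction n) (simp_all add: cis_mult[symmetric] add.commute)

lemma cis_2pi_int: "cis (2 * pi * of_int N) = 1"
proof -
  have "cos (2 * pi * of_int N) = 1" "sin (2 * pi * of_int N) = 0"
    using cos_int_2pin[of N] sin_int_2pin[of N] by (simp_all add: mult.commute mult.left_commute)
  then show ?thesis by (simp add: complex_eq_iff)
qed

lemma Arg_minus_one: "Arg (- 1) = pi"
  using Arg_cis[of pi] by (simp add: cis_pi)

theorem lemma2p5:
  fixes n :: nat and Q :: "complex mat"
  assumes "n \<ge> 2" and "Q \<in> SU n"
  shows "(su_plog n Q \<noteq> {} \<longleftrightarrow> (\<exists>k::nat. k \<le> s_mult Q \<and> zeta Q = real k))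
       \<and> ((\<exists>k::nat. k \<le> s_mult Q \<and> zeta Q = real k) \<longleftrightarrow>
            m_min n Q = (\<Sum>\<^sub># (image_mset (\<lambda>\<mu>. (Arg \<mu>)\<^sup>2) (eigs Q))))
       \<and> (su_plog n Q \<noteq> {} \<longrightarrow> Theta n Q = su_plog n Q)"
proof -
  have n0: "0 < n" using assms(1) by simp
  obtain V \<mu> where V: "unitaryM n V" and Qd: "Q = V * dmat n \<mu> * cadj V"
    and m1: "\<And>i. i < n \<Longrightarrow> cmod (\<mu> i) = 1" and pr: "(\<Prod>i<n. \<mu> i) = 1"
    using SU_diag[OF assms(2)] by blast
  define \<alpha> where "\<alpha> i = Arg (\<mu> i)" for i
  have eQ: "eigs Q = mset (map \<mu> [0..<n])" unfolding Qd by (rule conj_eigs[OF V])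
  have \<mu>\<alpha>: "\<mu> i = cis (\<alpha> i)" if "i < n" for i
  proof -
    have "\<mu> i \<noteq> 0" using m1[OF that] by auto
    then show ?thesis unfolding \<alpha>_def using m1[OF that] by (simp add: cis_Arg complex_sgn_def)
  qed
  have \<alpha>b: "- pi < \<alpha> i" "\<alpha> i \<le> pi" for i unfolding \<alpha>_def using Arg_bounded by auto
  have "(\<Prod>i<n. cis (\<alpha> i)) = (\<Prod>i<n. \<mu> i)" by (rule prod.cong) (simp_all add: \<mu>\<alpha>)
  then have "cis (\<Sum>i<n. \<alpha> i) = cis 0" unfolding cis_sum pr by simp
  from cis_eq_int[OF this] obtain N :: int where "(\<Sum>i<n. \<alpha> i) = 0 + 2 * pi * of_int N" by blast
  then have sum\<alpha>: "(\<Sum>i<n. \<alpha> i) = 2 * pi * of_int N" by simp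
  have zeta: "zeta Q = of_int N"
    unfolding zeta_def eQ msum_map \<alpha>_def[symmetric] sum\<alpha> by simp
  have sQ: "s_mult Q = card {i. i < n \<and> \<mu> i = - 1}" unfolding s_mult_def eQ mcount_map ..
  define S2 where "S2 = (\<Sum>\<^sub># (image_mset (\<lambda>\<mu>. (Arg \<mu>)\<^sup>2) (eigs Q)))"
  define Sset where "Sset = {frob2 X | X. X \<in> su n \<and> mexp X = Q}"
  have mQ: "m_min n Q = Inf Sset" unfolding m_min_def Sset_def ..

  have anal: "\<exists>\<theta>. (\<Sum>i<n. \<theta> i) = 0 \<and> frob2 X = (\<Sum>i<n. (\<theta> i)^2)
     \<and> eigs Q = mset (map (\<lambda>i. cis (\<theta> i)) [0..<n])
     \<and> (X \<in> su_plog n Q \<longleftrightarrow> (\<forall>i<n. - pi \<le> \<theta> i \<and> \<theta> i \<le> pi))"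
    if X: "X \<in> su n" and XQ: "mexp X = Q" for X
  proof -
    obtain U \<theta> where U: "unitaryM n U" and XU: "X = U * dmat n (\<lambda>i. \<i> * of_real (\<theta> i)) * cadj U"
      using su_analyze[OF X] by blast
    have "(\<Sum>i<n. \<theta> i) = 0" using th_su[OF U] X XU by simp
    moreover have "frob2 X = (\<Sum>i<n. (\<theta> i)^2)" unfolding XU by (rule th_frob2[OF U])
    moreover have "eigs Q = mset (map (\<lambda>i. cis (\<theta> i)) [0..<n])"
      using th_eigs[OF U, of \<theta>] XU XQ by simp
    moreover have "X \<in> su_plog n Q \<longleftrightarrow> (\<forall>i<n. - pi \<le> \<theta> i \<and> \<theta> i \<le> pi)"
      using th_eig_bound[OF U, of \<theta>] X XQ XU unfolding su_plog_def by auto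
    ultimately show ?thesis by blast
  qed

  have constr: "\<exists>X. X \<in> su n \<and> mexp X = Q \<and> ((\<forall>i<n. - pi \<le> \<theta> i \<and> \<theta> i \<le> pi) \<longrightarrow> X \<in> su_plog n Q)"
    if c: "\<And>i. i < n \<Longrightarrow> cis (\<theta> i) = \<mu> i" and s: "(\<Sum>i<n. \<theta> i) = 0" for \<theta>
  proof -
    define X where "X = V * dmat n (\<lambda>i. \<i> * of_real (\<theta> i)) * cadj V"
    have X: "X \<in> su n" unfolding X_def using th_su[OF V] s by simp
    have "mexp X = V * dmat n (\<lambda>i. cis (\<theta> i)) * cadj V" unfolding X_def by (rule th_mexp[OF V])
    also have "dmat n (\<lambda>i. cis (\<theta> i)) = dmat n \<mu>" using c by (rule dmat_cong)
    finally have XQ: "mexp X = Q" unfolding Qd .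
    have "(\<forall>i<n. - pi \<le> \<theta> i \<and> \<theta> i \<le> pi) \<longrightarrow> X \<in> su_plog n Q"
      using th_eig_bound[OF V, of \<theta>] X XQ unfolding su_plog_def X_def by auto
    then show ?thesis using X XQ by blast
  qed

  have Sne: "Sset \<noteq> {}"
  proof -
    define \<theta> where "\<theta> i = \<alpha> i - (if i = 0 then 2 * pi * of_int N else 0)" for i
    have "cis (\<theta> i) = \<mu> i" if "i < n" for i
      using \<mu>\<alpha>[OF that] by (auto simp: \<theta>_def cis_divide[symmetric] cis_2pi_int)
    moreover have "(\<Sum>i<n. \<theta> i) = 0"
      unfolding \<theta>_def sum_subtractf sum\<alpha> using n0 by (simp add: sum.delta')
    ultimately obtain X where "X \<in> su n" "mexp X = Q" using constr by blast
    then show ?thesis unfolding Sset_def by blast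
  qed

  have lower: "S2 \<le> x" if xS: "x \<in> Sset" for x
  proof -
    obtain X where X: "X \<in> su n" "mexp X = Q" and x: "x = frob2 X" using xS unfolding Sset_def by blast
    obtain \<theta> where fr: "frob2 X = (\<Sum>i<n. (\<theta> i)^2)" and eq: "eigs Q = mset (map (\<lambda>i. cis (\<theta> i)) [0..<n])"
      using anal[OF X] by blast
    have "S2 = (\<Sum>i<n. (Arg (cis (\<theta> i)))^2)" unfolding S2_def eq msum_map ..
    also have "\<dots> \<le> (\<Sum>i<n. (\<theta> i)^2)" by (intro sum_mono Arg_cis_sq_le)
    finally show ?thesis using x fr by simp
  qed

  have plog_val: "frob2 X = S2" if X: "X \<in> su_plog n Q" for X
  proof -
    have X': "X \<in> su n" "mexp X = Q" using X unfolding su_plog_def by auto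
    obtain \<theta> where fr: "frob2 X = (\<Sum>i<n. (\<theta> i)^2)" and eq: "eigs Q = mset (map (\<lambda>i. cis (\<theta> i)) [0..<n])"
      and b: "\<forall>i<n. - pi \<le> \<theta> i \<and> \<theta> i \<le> pi"
      using anal[OF X'] X by blast
    have "S2 = (\<Sum>i<n. (Arg (cis (\<theta> i)))^2)" unfolding S2_def eq msum_map ..
    also have "\<dots> = (\<Sum>i<n. (\<theta> i)^2)"
      by (rule sum.cong) (use b Arg_cis_range in auto)
    finally show ?thesis using fr by simp
  qed

  have i_ii: "\<exists>k::nat. k \<le> s_mult Q \<and> zeta Q = real k" if ne: "su_plog n Q \<noteq> {}"
  proof -
    obtain X where X: "X \<in> su_plog n Q" using ne by blast
    have X': "X \<in> su n" "mexp X = Q" using X unfolding su_plog_def by auto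
    obtain \<theta> where s0: "(\<Sum>i<n. \<theta> i) = 0" and eq: "eigs Q = mset (map (\<lambda>i. cis (\<theta> i)) [0..<n])"
      and b: "\<forall>i<n. - pi \<le> \<theta> i \<and> \<theta> i \<le> pi"
      using anal[OF X'] X by blast
    define k where "k = card {i. i < n \<and> \<theta> i = - pi}"
    have "(\<Sum>i<n. Arg (cis (\<theta> i))) = (\<Sum>i<n. \<theta> i + (if \<theta> i = - pi then 2 * pi else 0))"
      by (rule sum.cong) (use b Arg_cis_range in auto)
    also have "\<dots> = (\<Sum>i<n. if \<theta> i = - pi then 2 * pi else 0)" by (simp add: sum.distrib s0)
    also have "\<dots> = (\<Sum>i\<in>{i. i < n \<and> \<theta> i = - pi}. 2 * pi)"
      by (simp add: sum.If_cases Collect_conj_eq lessThan_def Int_commute)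
    also have "\<dots> = 2 * pi * real k" unfolding k_def by simp
    finally have "zeta Q = real k"
      unfolding zeta_def eq msum_map by simp
    moreover have "k \<le> s_mult Q"
      unfolding s_mult_def eq mcount_map k_def by (rule card_mono) (auto simp: cis_minus_pi)
    ultimately show ?thesis by blast
  qed

  have ii_i: "su_plog n Q \<noteq> {}" if ex: "\<exists>k::nat. k \<le> s_mult Q \<and> zeta Q = real k"
  proof -
    obtain k :: nat where k: "k \<le> s_mult Q" "zeta Q = real k" using ex by blast
    have Nk: "of_int N = real k" using k zeta by simp
    define J where "J = {i. i < n \<and> \<mu> i = - 1}"
    have "k \<le> card J" using k sQ J_def by simp
    then obtain J' where J': "J' \<subseteq> J" "card J' = k" using obtain_subset_with_card_n by metis
    have fJ': "finite J'" using J' by (auto intro: finite_subset simp: J_def)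
    define \<theta> where "\<theta> i = \<alpha> i - (if i \<in> J' then 2 * pi else 0)" for i
    have aJ: "\<alpha> i = pi" if "i \<in> J'" for i using J' that by (auto simp: J_def \<alpha>_def Arg_minus_one)
    have c: "cis (\<theta> i) = \<mu> i" if "i < n" for i
      using \<mu>\<alpha>[OF that] J' aJ by (auto simp: \<theta>_def J_def cis_minus_pi)
    have JJ: "{..<n} \<inter> J' = J'" using J' by (auto simp: J_def)
    have "(\<Sum>i<n. \<theta> i) = (\<Sum>i<n. \<alpha> i) - (\<Sum>i<n. if i \<in> J' then 2 * pi else 0)"
      unfolding \<theta>_def by (simp add: sum_subtractf)
    also have "(\<Sum>i<n. if i \<in> J' then 2 * pi else 0) = (\<Sum>i\<in>J'. 2 * pi)"
      by (simp add: sum.If_cases JJ)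
    also have "\<dots> = 2 * pi * real k" using J' by simp
    finally have s: "(\<Sum>i<n. \<theta> i) = 0" using sum\<alpha> Nk by simp
    have b: "\<forall>i<n. - pi \<le> \<theta> i \<and> \<theta> i \<le> pi"
    proof (intro allI impI)
      fix i assume "i < n"
      have "- pi < \<alpha> i" "\<alpha> i \<le> pi" by (rule \<alpha>b)+
      then show "- pi \<le> \<theta> i \<and> \<theta> i \<le> pi" using aJ[of i] by (auto simp: \<theta>_def)
    qed
    obtain X where "X \<in> su n" "mexp X = Q" "(\<forall>i<n. - pi \<le> \<theta> i \<and> \<theta> i \<le> pi) \<longrightarrow> X \<in> su_plog n Q"
      using constr[OF c s] by blast
    then show ?thesis using b by blast
  qed

  have ii_iii: "m_min n Q = S2" if ex: "\<exists>k::nat. k \<le> s_mult Q \<and> zeta Q = real k"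
  proof -
    obtain X where X: "X \<in> su_plog n Q" using ii_i[OF ex] by blast
    have "S2 \<in> Sset" using plog_val[OF X] X unfolding Sset_def su_plog_def by force
    then show ?thesis unfolding mQ using lower by (intro cInf_eq_minimum) auto
  qed

  have iii_ii: "\<exists>k::nat. k \<le> s_mult Q \<and> zeta Q = real k" if mm: "m_min n Q = S2"
  proof (rule ccontr)
    assume nii: "\<not> (\<exists>k::nat. k \<le> s_mult Q \<and> zeta Q = real k)"
    then have emp: "su_plog n Q = {}" using i_ii by blast
    define \<delta> where "\<delta> = Min ((\<lambda>i. gapf (\<alpha> i) - (\<alpha> i)^2) ` {..<n})"
    have gp: "0 < gapf (\<alpha> i) - (\<alpha> i)^2" for i using gapf_pos[OF \<alpha>b(1) \<alpha>b(2), of i] by simp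
    have \<delta>0: "0 < \<delta>" unfolding \<delta>_def by (subst Min_gr_iff) (use n0 gp in auto)
    have "S2 + \<delta> \<le> y" if y: "y \<in> Sset" for y
    proof -
      obtain X where X: "X \<in> su n" "mexp X = Q" and x: "y = frob2 X" using y unfolding Sset_def by blast
      obtain \<theta> where fr: "frob2 X = (\<Sum>i<n. (\<theta> i)^2)" and eq: "eigs Q = mset (map (\<lambda>i. cis (\<theta> i)) [0..<n])"
        and pl: "X \<in> su_plog n Q \<longleftrightarrow> (\<forall>i<n. - pi \<le> \<theta> i \<and> \<theta> i \<le> pi)"
        using anal[OF X] by blast
      obtain j where j: "j < n" "pi < \<bar>\<theta> j\<bar>" using pl emp by force
      have "cis (\<theta> j) \<in> set_mset (eigs Q)" unfolding eq using j by auto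
      then obtain i where i: "i < n" "cis (\<theta> j) = \<mu> i" unfolding eQ by auto
      have Aj: "Arg (cis (\<theta> j)) = \<alpha> i" using i by (simp add: \<alpha>_def)
      have "\<delta> \<le> gapf (\<alpha> i) - (\<alpha> i)^2" unfolding \<delta>_def using i by (intro Min_le) auto
      also have "\<dots> \<le> (\<theta> j)^2 - (Arg (cis (\<theta> j)))^2" using Arg_cis_gap[OF j(2)] Aj by simp
      also have "\<dots> \<le> (\<Sum>l<n. (\<theta> l)^2 - (Arg (cis (\<theta> l)))^2)"
        by (rule member_le_sum) (use j Arg_cis_sq_le in auto)
      also have "\<dots> = frob2 X - S2"
        unfolding fr S2_def eq msum_map by (simp add: sum_subtractf)
      finally show ?thesis using x by simp
    qed
    then have "S2 + \<delta> \<le> Inf Sset" using Sne by (intro cInf_greatest) auto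
    then show False using mm mQ \<delta>0 by simp
  qed

  have theta: "Theta n Q = su_plog n Q" if ne: "su_plog n Q \<noteq> {}"
  proof -
    have mm: "m_min n Q = S2" using ii_iii[OF i_ii[OF ne]] .
    show ?thesis
    proof
      show "su_plog n Q \<subseteq> Theta n Q"
        using plog_val mm unfolding Theta_def su_plog_def by auto
      show "Theta n Q \<subseteq> su_plog n Q"
      proof
        fix X assume X: "X \<in> Theta n Q"
        then have X': "X \<in> su n" "mexp X = Q" and fX: "frob2 X = S2" using mm unfolding Theta_def by auto
        obtain \<theta> where fr: "frob2 X = (\<Sum>i<n. (\<theta> i)^2)" and eq: "eigs Q = mset (map (\<lambda>i. cis (\<theta> i)) [0..<n])"
          and pl: "X \<in> su_plog n Q \<longleftrightarrow> (\<forall>i<n. - pi \<le> \<theta> i \<and> \<theta> i \<le> pi)"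
          using anal[OF X'] by blast
        have "(\<Sum>l<n. (\<theta> l)^2 - (Arg (cis (\<theta> l)))^2) = 0"
          using fX unfolding fr S2_def eq msum_map by (simp add: sum_subtractf)
        then have z: "\<forall>l\<in>{..<n}. (\<theta> l)^2 - (Arg (cis (\<theta> l)))^2 = 0"
          by (subst (asm) sum_nonneg_eq_0_iff) (use Arg_cis_sq_le in auto)
        have "- pi \<le> \<theta> i \<and> \<theta> i \<le> pi" if i: "i < n" for i
        proof -
          have "\<bar>Arg (cis (\<theta> i))\<bar> \<le> pi" using Arg_bounded[of "cis (\<theta> i)"] by auto
          moreover have "(\<theta> i)^2 = (Arg (cis (\<theta> i)))^2" using z i by auto
          moreover have "\<bar>\<theta> i\<bar> \<le> \<bar>Arg (cis (\<theta> i))\<bar>"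
            using calculation(2) by (simp add: abs_le_square_iff)
          ultimately have "\<bar>\<theta> i\<bar> \<le> pi" by linarith
          then show ?thesis by auto
        qed
        then show "X \<in> su_plog n Q" using pl by blast
      qed
    qed
  qed

  show ?thesis using i_ii ii_i ii_iii iii_ii theta unfolding S2_def by blast
qed

end
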